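(* If $t\in\mathtt T_J$ is typable in $\cap J$ (i.e. $\Gamma\vdash t:\sigma$ for some $\Gamma,\sigma$), then $t$ is strongly normalizing for $\to_\beta\cup\to_\pi$.
   Context: Terms $\mathtt T_J$: $t,u,r ::= x \mid \lambda x.t \mid t(u,y.r)$ ($y$ bound in $r$), up to $\alpha$-equivalence; $\{u/x\}t$ capture-avoiding substitution. Rules of $\Lambda J$: $\beta$: $(\lambda x.t)(u,y.r)\mapsto\{\{u/x\}t/y\}r$; $\pi$: $t(u,x.r)(u',y.r')\mapsto t(u,x.r(u',y.r'))$ (with $x\notin\mathrm{fv}(u')\cup\mathrm{fv}(r')$); $\to_\beta,\to_\pi$ their closures under all contexts. System $\cap J$: types $\sigma,\tau ::= \alpha \mid \mathcal M\to\sigma$, $\mathcal M=[\sigma_i]_{i\in I}$ a finite possibly empty multiset; $\sqcup$ multiset union; environments map variables to multisets, $\wedge$ pointwise union, $\Gamma;x:\mathcal M$ extension with $x\notin\mathrm{dom}\,\Gamma$. $\mathrm{ch}(\mathcal M)=\mathcal M$ if $\mathcal M\ne[\,]$, $\mathrm{ch}([\,])=[\tau]$ for an arbitrary $\tau$. Rules: (var) $x:[\sigma]\vdash x:\sigma$; (abs) from $\Gamma;x:\mathcal M\vdash t:\sigma$ infer $\Gamma\vdash\lambda x.t:\mathcal M\to\sigma$; (many) from $(\Gamma_i\vdash t:\sigma_i)_{i\in I}$, $I\ne\emptyset$, infer $\wedge_i\Gamma_i\vdash t:[\sigma_i]_{i\in I}$; (app) from $\Gamma\vdash t:\mathrm{ch}([\mathcal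 M_i\to\tau_i]_{i\in I})$, $\Delta\vdash u:\mathrm{ch}(\sqcup_i\mathcal M_i)$, $\Lambda;y:[\tau_i]_{i\in I}\vdash r:\sigma$ infer $\Gamma\wedge\Delta\wedge\Lambda\vdash t(u,y.r):\sigma$. *)

theory Defs
  imports "HOL-Library.Multiset"
begin

text \<open>Terms up to alpha-equivalence are represented with de Bruijn indices.
  \<open>JApp t u r\<close> stands for \<open>t(u, y.r)\<close>; the variable \<open>y\<close> is bound in \<open>r\<close>
  and is index 0 there.\<close>

datatype trm = JVar nat | JLam trm | JApp trm trm trm

fun lift :: "nat \<Rightarrow> trm \<Rightarrow> trm" where
  "lift k (JVar i) = (if i < k then JVar i else JVar (Suc i))"
| "lift k (JLam t) = JLam (lift (Suc k) t)"
| "lift k (JApp t u r) = JApp (lift k t) (lift k u) (lift (Suc k) r)"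

text \<open>\<open>subst t k s\<close>: capture-avoiding substitution of \<open>s\<close> for index \<open>k\<close> in \<open>t\<close>,
  removing that index (free indices above \<open>k\<close> are decremented).\<close>
fun subst :: "trm \<Rightarrow> nat \<Rightarrow> trm \<Rightarrow> trm" where
  "subst (JVar i) k s = (if i < k then JVar i else if i = k then s else JVar (i - 1))"
| "subst (JLam t) k s = JLam (subst t (Suc k) (lift 0 s))"
| "subst (JApp t u r) k s = JApp (subst t k s) (subst u k s) (subst r (Suc k) (lift 0 s))"

inductive beta :: "trm \<Rightarrow> trm \<Rightarrow> bool" where
  beta_root: "beta (JApp (JLam t) u r) (subst r 0 (subst t 0 u))"
| beta_lam: "beta t t' \<Longrightarrow> beta (JLam t) (JLam t')"
| beta_app1: "beta t t' \<Longrightarrow> beta (JApp t u r) (JApp t' u r)"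
| beta_app2: "beta u u' \<Longrightarrow> beta (JApp t u r) (JApp t u' r)"
| beta_app3: "beta r r' \<Longrightarrow> beta (JApp t u r) (JApp t u r')"

text \<open>pi: t(u,x.r)(u',y.r') \<mapsto> t(u,x.r(u',y.r')); the side condition
  x \<notin> fv(u') \<union> fv(r') is realised by shifting u' and r' past the new binder x.\<close>
inductive pi :: "trm \<Rightarrow> trm \<Rightarrow> bool" where
  pi_root: "pi (JApp (JApp t u r) u' r') (JApp t u (JApp r (lift 0 u') (lift 1 r')))"
| pi_lam: "pi t t' \<Longrightarrow> pi (JLam t) (JLam t')"
| pi_app1: "pi t t' \<Longrightarrow> pi (JApp t u r) (JApp t' u r)"
| pi_app2: "pi u u' \<Longrightarrow> pi (JApp t u r) (JApp t u' r)"
| pi_app3: "pi r r' \<Longrightarrow> pi (JApp t u r) (JApp t u r')"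

definition beta_pi :: "trm \<Rightarrow> trm \<Rightarrow> bool" where
  "beta_pi t t' \<longleftrightarrow> beta t t' \<or> pi t t'"

definition SN :: "(trm \<Rightarrow> trm \<Rightarrow> bool) \<Rightarrow> trm \<Rightarrow> bool" where
  "SN R t \<longleftrightarrow> Wellfounded.accp (\<lambda>t' t. R t t') t"

datatype ty = TAtom nat | TArr "ty multiset" ty

type_synonym env = "nat \<Rightarrow> ty multiset"

definition env_union :: "env \<Rightarrow> env \<Rightarrow> env" (infixl "\<and>\<^sub>e" 65) where
  "env_union \<Gamma> \<Delta> = (\<lambda>x. \<Gamma> x + \<Delta> x)"

text \<open>\<open>env_ext \<Gamma> M\<close> is \<open>\<Gamma>; x:M\<close> where x is the freshly bound index 0.\<close>
definition env_ext :: "env \<Rightarrow> ty multiset \<Rightarrow> env" where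
  "env_ext \<Gamma> M = (\<lambda>x. case x of 0 \<Rightarrow> M | Suc n \<Rightarrow> \<Gamma> n)"

definition env_single :: "nat \<Rightarrow> ty \<Rightarrow> env" where
  "env_single x \<sigma> = (\<lambda>y. if y = x then {#\<sigma>#} else {#})"

definition env_empty :: env where "env_empty = (\<lambda>_. {#})"

definition ch :: "ty multiset \<Rightarrow> ty \<Rightarrow> ty multiset" where
  "ch M \<tau> = (if M = {#} then {#\<tau>#} else M)"

inductive typing :: "env \<Rightarrow> trm \<Rightarrow> ty \<Rightarrow> bool"
  and mtyping :: "env \<Rightarrow> trm \<Rightarrow> ty multiset \<Rightarrow> bool" where
  t_var: "typing (env_single x \<sigma>) (JVar x) \<sigma>"
| t_abs: "typing (env_ext \<Gamma> M) t \<sigma> \<Longrightarrow> typing \<Gamma> (JLam t) (TArr M \<sigma>)"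
| t_app: "\<lbrakk> mtyping \<Gamma> t (ch (mset (map (\<lambda>(M, \<tau>). TArr M \<tau>) ps)) \<tau>1);
           mtyping \<Delta> u (ch (sum_list (map fst ps)) \<tau>2);
           typing (env_ext \<Lambda> (mset (map snd ps))) r \<sigma> \<rbrakk>
          \<Longrightarrow> typing (\<Gamma> \<and>\<^sub>e \<Delta> \<and>\<^sub>e \<Lambda>) (JApp t u r) \<sigma>"
| m_one: "typing \<Gamma> t \<sigma> \<Longrightarrow> mtyping \<Gamma> t {#\<sigma>#}"
| m_add: "\<lbrakk> mtyping \<Gamma> t M; typing \<Delta> t \<sigma> \<rbrakk> \<Longrightarrow> mtyping (\<Gamma> \<and>\<^sub>e \<Delta>) t (M + {#\<sigma>#})"

end

theory Submission
  imports Defs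
begin

definition env_ins :: "nat \<Rightarrow> env \<Rightarrow> ty multiset \<Rightarrow> env" where
  "env_ins k \<Gamma> M = (\<lambda>x. if x < k then \<Gamma> x else if x = k then M else \<Gamma> (x - 1))"

definition env_del :: "nat \<Rightarrow> env \<Rightarrow> env" where
  "env_del k \<Gamma> = (\<lambda>x. if x < k then \<Gamma> x else \<Gamma> (Suc x))"

lemma env_ext_0[simp]: "env_ext \<Gamma> M 0 = M" and env_ext_Suc[simp]: "env_ext \<Gamma> M (Suc n) = \<Gamma> n"
  by (simp_all add: env_ext_def)

lemma env_ext_ins: "env_ext (env_ins k \<Gamma> N) M = env_ins (Suc k) (env_ext \<Gamma> M) N"
  by (rule ext) (auto simp: env_ins_def env_ext_def split: nat.split)

lemma env_ins0: "env_ins 0 \<Gamma> M = env_ext \<Gamma> M"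
  by (rule ext, case_tac x) (auto simp: env_ins_def)

lemma env_del_ext: "env_del (Suc k) (env_ext \<Gamma> M) = env_ext (env_del k \<Gamma>) M"
  by (rule ext, case_tac x) (auto simp: env_del_def)

lemma env_del0_ext: "env_del 0 (env_ext \<Gamma> M) = \<Gamma>"
  by (rule ext) (auto simp: env_del_def)

lemma ch_ne[simp]: "ch M \<tau> \<noteq> {#}" by (simp add: ch_def)

inductive tw :: "env \<Rightarrow> trm \<Rightarrow> ty \<Rightarrow> nat \<Rightarrow> bool"
  and mw :: "env \<Rightarrow> trm \<Rightarrow> ty multiset \<Rightarrow> nat \<Rightarrow> bool" where
  tw_var: "\<sigma> \<in># \<Gamma> x \<Longrightarrow> tw \<Gamma> (JVar x) \<sigma> 1"
| tw_abs: "tw (env_ext \<Gamma> M) t \<sigma> n \<Longrightarrow> tw \<Gamma> (JLam t) (TArr M \<sigma>) (Suc n)"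
| tw_app: "\<lbrakk> mw \<Gamma>1 t (ch (mset (map (\<lambda>(M, \<tau>). TArr M \<tau>) ps)) \<tau>1) n1;
           mw \<Gamma>2 u (ch (sum_list (map fst ps)) \<tau>2) n2;
           tw (env_ext \<Gamma>3 (mset (map snd ps))) r \<sigma> n3;
           \<forall>x. \<Gamma>1 x + \<Gamma>2 x + \<Gamma>3 x \<subseteq># \<Gamma> x \<rbrakk>
          \<Longrightarrow> tw \<Gamma> (JApp t u r) \<sigma> (Suc (n1 + n2 + n3))"
| mw_nil: "mw \<Gamma> t {#} 0"
| mw_add: "\<lbrakk> mw \<Gamma>1 t M n1; tw \<Gamma>2 t \<sigma> n2; \<forall>x. \<Gamma>1 x + \<Gamma>2 x \<subseteq># \<Gamma> x \<rbrakk>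
          \<Longrightarrow> mw \<Gamma> t (add_mset \<sigma> M) (n1 + n2)"

inductive_cases twVarE: "tw \<Gamma> (JVar x) \<sigma> n"
inductive_cases twLamE: "tw \<Gamma> (JLam t) \<sigma> n"
inductive_cases twAppE: "tw \<Gamma> (JApp t u r) \<sigma> n"
inductive_cases mwNilE: "mw \<Gamma> t {#} n"

lemma weaken:
  "tw \<Gamma> t \<sigma> n \<Longrightarrow> (\<forall>x. \<Gamma> x \<subseteq># \<Gamma>' x) \<Longrightarrow> tw \<Gamma>' t \<sigma> n"
  "mw \<Gamma> t M n \<Longrightarrow> (\<forall>x. \<Gamma> x \<subseteq># \<Gamma>' x) \<Longrightarrow> mw \<Gamma>' t M n"
proof (induction arbitrary: \<Gamma>' and \<Gamma>' rule: tw_mw.inducts)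
  case (tw_var \<sigma> \<Gamma> x)
  then show ?case by (meson mset_subset_eqD tw_mw.tw_var)
next
  case (tw_abs \<Gamma> M t \<sigma> n)
  have "\<forall>x. env_ext \<Gamma> M x \<subseteq># env_ext \<Gamma>' M x"
    using tw_abs.prems by (auto simp: env_ext_def split: nat.split)
  then show ?case using tw_abs.IH by (auto intro: tw_mw.tw_abs)
next
  case (tw_app \<Gamma>1 t ps \<tau>1 n1 \<Gamma>2 u \<tau>2 n2 \<Gamma>3 r \<sigma> n3 \<Gamma>)
  then show ?case by (meson subset_mset.order_trans tw_mw.tw_app)
next
  case (mw_nil \<Gamma> t)
  show ?case by (rule tw_mw.mw_nil)
next
  case (mw_add \<Gamma>1 t M n1 \<Gamma>2 \<sigma> n2 \<Gamma>)
  then show ?case by (meson subset_mset.order_trans tw_mw.mw_add)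
qed

lemma tw_pos: "tw \<Gamma> t \<sigma> n \<Longrightarrow> 1 \<le> n"
  by (induction rule: tw.cases) auto

lemma mw_size:
  "tw \<Gamma> t \<sigma> n \<Longrightarrow> True"
  "mw \<Gamma> t M n \<Longrightarrow> size M \<le> n"
  by (induction rule: tw_mw.inducts) (auto dest: tw_pos)

lemma mw_nil0: "mw \<Gamma> t {#} n \<Longrightarrow> n = 0"
  by (erule mwNilE) auto

lemma mw_addE:
  "tw \<Gamma> t \<sigma> n \<Longrightarrow> True"
  "mw \<Gamma> t N n \<Longrightarrow> N = add_mset a M \<Longrightarrow> \<exists>\<Gamma>a \<Gamma>b na nb. tw \<Gamma>a t a na \<and> mw \<Gamma>b t M nb
      \<and> (\<forall>x. \<Gamma>a x + \<Gamma>b x \<subseteq># \<Gamma> x) \<and> n = na + nb"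
proof (induction arbitrary: and a M rule: tw_mw.inducts)
  case (mw_add \<Gamma>1 t M' n1 \<Gamma>2 \<sigma> n2 \<Gamma>)
  show ?case
  proof (cases "\<sigma> = a")
    case True
    then show ?thesis using mw_add.hyps mw_add.prems
      by (intro exI[of _ \<Gamma>2] exI[of _ \<Gamma>1] exI[of _ n2] exI[of _ n1]) (auto simp: add.commute)
  next
    case False
    then obtain M'' where M': "M' = add_mset a M''" and M: "M = add_mset \<sigma> M''"
      using mw_add.prems by (metis add_eq_conv_ex)
    from mw_add.IH(1)[OF M'] obtain \<Gamma>a \<Gamma>b na nb where
      h: "tw \<Gamma>a t a na" "mw \<Gamma>b t M'' nb" "\<forall>x. \<Gamma>a x + \<Gamma>b x \<subseteq># \<Gamma>1 x" "n1 = na + nb" by blast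
    have "mw (\<lambda>x. \<Gamma>b x + \<Gamma>2 x) t M (nb + n2)"
      unfolding M by (rule tw_mw.mw_add[OF h(2) mw_add.hyps(2)]) simp
    moreover have "\<forall>x. \<Gamma>a x + (\<Gamma>b x + \<Gamma>2 x) \<subseteq># \<Gamma> x"
      using h(3) mw_add.hyps(3) by (metis add.assoc subset_mset.add_right_mono subset_mset.order_trans)
    ultimately show ?thesis using h(1,4)
      by (intro exI[of _ \<Gamma>a] exI[of _ "\<lambda>x. \<Gamma>b x + \<Gamma>2 x"] exI[of _ na] exI[of _ "nb+n2"]) auto
  qed
qed auto

lemma mw_addE':
  "mw \<Gamma> t (add_mset a M) n \<Longrightarrow> \<exists>\<Gamma>a \<Gamma>b na nb. tw \<Gamma>a t a na \<and> mw \<Gamma>b t M nb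
      \<and> (\<forall>x. \<Gamma>a x + \<Gamma>b x \<subseteq># \<Gamma> x) \<and> n = na + nb"
  using mw_addE(2) by blast

lemma mw_single: "mw \<Gamma> t {#a#} n \<Longrightarrow> tw \<Gamma> t a n"
proof -
  assume "mw \<Gamma> t {#a#} n"
  then obtain \<Gamma>a \<Gamma>b na nb where h: "tw \<Gamma>a t a na" "mw \<Gamma>b t {#} nb"
      "\<forall>x. \<Gamma>a x + \<Gamma>b x \<subseteq># \<Gamma> x" "n = na + nb"
    using mw_addE'[of \<Gamma> t a "{#}" n] by auto
  have "nb = 0" using h(2) by (rule mw_nil0)
  have "\<forall>x. \<Gamma>a x \<subseteq># \<Gamma> x" using h(3) by (metis mset_subset_eq_add_left subset_mset.order_trans)
  then show ?thesis using weaken(1)[OF h(1)] h(4) \<open>nb = 0\<close> by simp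
qed

lemma tw_mw1: "tw \<Gamma> t a n \<Longrightarrow> mw \<Gamma> t {#a#} n"
  using tw_mw.mw_add[OF tw_mw.mw_nil[of "\<lambda>_. {#}"], of \<Gamma> t a n \<Gamma>] by simp

lemma mw_union_aux:
  "tw \<Gamma> t \<sigma> n \<Longrightarrow> True"
  "mw \<Gamma>b t N nb \<Longrightarrow> mw \<Gamma>a t M na \<Longrightarrow> mw (\<lambda>x. \<Gamma>a x + \<Gamma>b x) t (M + N) (na + nb)"
proof (induction rule: tw_mw.inducts)
  case (mw_nil \<Gamma> t)
  then show ?case by (auto intro: weaken(2))
next
  case (mw_add \<Gamma>1 t N n1 \<Gamma>2 \<sigma> n2 \<Gamma>)
  have "mw (\<lambda>x. \<Gamma>a x + \<Gamma>1 x) t (M + N) (na + n1)" using mw_add by blast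
  from tw_mw.mw_add[OF this mw_add.hyps(2), of "\<lambda>x. \<Gamma>a x + \<Gamma> x"]
  show ?case using mw_add.hyps(3)
    by (simp add: add.assoc subset_mset.add_left_mono)
qed auto

lemma mw_union: "mw \<Gamma>a t M na \<Longrightarrow> mw \<Gamma>b t N nb \<Longrightarrow> mw (\<lambda>x. \<Gamma>a x + \<Gamma>b x) t (M + N) (na + nb)"
  using mw_union_aux(2) by blast

lemma mw_split: "mw \<Gamma> t (M + N) n \<Longrightarrow> \<exists>\<Gamma>a \<Gamma>b na nb. mw \<Gamma>a t M na \<and> mw \<Gamma>b t N nb
      \<and> (\<forall>x. \<Gamma>a x + \<Gamma>b x \<subseteq># \<Gamma> x) \<and> n = na + nb"
proof (induction M arbitrary: \<Gamma> n)
  case empty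
  then show ?case
    by (intro exI[of _ "\<lambda>_. {#}"] exI[of _ \<Gamma>] exI[of _ 0] exI[of _ n]) (auto intro: tw_mw.mw_nil)
next
  case (add a M)
  then obtain \<Gamma>a \<Gamma>b na nb where h: "tw \<Gamma>a t a na" "mw \<Gamma>b t (M + N) nb"
      "\<forall>x. \<Gamma>a x + \<Gamma>b x \<subseteq># \<Gamma> x" "n = na + nb"
    using mw_addE'[of \<Gamma> t a "M + N" n] by auto
  then obtain \<Gamma>1 \<Gamma>2 n1 n2 where g: "mw \<Gamma>1 t M n1" "mw \<Gamma>2 t N n2"
      "\<forall>x. \<Gamma>1 x + \<Gamma>2 x \<subseteq># \<Gamma>b x" "nb = n1 + n2"
    using add.IH by blast
  have "mw (\<lambda>x. \<Gamma>1 x + \<Gamma>a x) t (add_mset a M) (n1 + na)"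
    by (rule tw_mw.mw_add[OF g(1) h(1)]) simp
  moreover have "\<forall>x. (\<Gamma>1 x + \<Gamma>a x) + \<Gamma>2 x \<subseteq># \<Gamma> x"
  proof
    fix x
    have "(\<Gamma>1 x + \<Gamma>a x) + \<Gamma>2 x = \<Gamma>a x + (\<Gamma>1 x + \<Gamma>2 x)" by (simp add: ac_simps)
    also have "\<dots> \<subseteq># \<Gamma>a x + \<Gamma>b x" using g(3) by (simp add: subset_mset.add_left_mono)
    also have "\<dots> \<subseteq># \<Gamma> x" using h(3) by blast
    finally show "(\<Gamma>1 x + \<Gamma>a x) + \<Gamma>2 x \<subseteq># \<Gamma> x" .
  qed
  ultimately show ?case using g(2,4) h(4)
    by (intro exI[of _ "\<lambda>x. \<Gamma>1 x + \<Gamma>a x"] exI[of _ \<Gamma>2] exI[of _ "n1 + na"] exI[of _ n2]) auto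
qed

lemma sub_add_both: "(A::'a multiset) \<subseteq># B \<Longrightarrow> C \<subseteq># D \<Longrightarrow> A + C \<subseteq># B + D"
  by (rule subset_mset.add_mono)

lemma sub_trans_addr: "(A::'a multiset) + B \<subseteq># C \<Longrightarrow> A \<subseteq># C"
  by (metis mset_subset_eq_add_left subset_mset.order_trans)

lemma sub_trans_addl: "(A::'a multiset) + B \<subseteq># C \<Longrightarrow> B \<subseteq># C"
  by (metis mset_subset_eq_add_right subset_mset.order_trans)

lemma mset3: "(A1::'a multiset)+A2+A3 \<subseteq># A \<Longrightarrow> B1+B2+B3 \<subseteq># B \<Longrightarrow> (A1+B1)+(A2+B2)+(A3+B3) \<subseteq># A+B"
proof -
  assume "A1+A2+A3 \<subseteq># A" "B1+B2+B3 \<subseteq># B"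
  then have "(A1+A2+A3) + (B1+B2+B3) \<subseteq># A+B" by (rule sub_add_both)
  then show ?thesis by (simp add: ac_simps)
qed

lemma mset2: "(A1::'a multiset)+A2 \<subseteq># A \<Longrightarrow> B1+B2 \<subseteq># B \<Longrightarrow> (A1+B1)+(A2+B2) \<subseteq># A+B"
proof -
  assume "A1+A2 \<subseteq># A" "B1+B2 \<subseteq># B"
  then have "(A1+A2) + (B1+B2) \<subseteq># A+B" by (rule sub_add_both)
  then show ?thesis by (simp add: ac_simps)
qed

lemma env_sum_ext: "(\<lambda>x. env_ext \<Gamma> M x + env_ext \<Delta> N x) = env_ext (\<lambda>x. \<Gamma> x + \<Delta> x) (M + N)"
  by (rule ext) (simp add: env_ext_def split: nat.split)

lemma mw_split2:
  assumes "mw \<Delta> s M m" "M1 + M2 \<subseteq># M"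
  shows "\<exists>\<Delta>1 \<Delta>2 m1 m2. mw \<Delta>1 s M1 m1 \<and> mw \<Delta>2 s M2 m2 \<and> (\<forall>x. \<Delta>1 x + \<Delta>2 x \<subseteq># \<Delta> x)
     \<and> m1 + m2 + size M \<le> m + size M1 + size M2"
proof -
  obtain X where X: "M = (M1 + M2) + X" using assms(2) by (metis subset_mset.le_iff_add)
  obtain \<Delta>p \<Delta>x mp mx where h: "mw \<Delta>p s (M1 + M2) mp" "mw \<Delta>x s X mx"
      "\<forall>x. \<Delta>p x + \<Delta>x x \<subseteq># \<Delta> x" "m = mp + mx"
    using mw_split[of \<Delta> s "M1 + M2" X m] assms(1) X by auto
  obtain \<Delta>1 \<Delta>2 m1 m2 where g: "mw \<Delta>1 s M1 m1" "mw \<Delta>2 s M2 m2"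
      "\<forall>x. \<Delta>1 x + \<Delta>2 x \<subseteq># \<Delta>p x" "mp = m1 + m2"
    using mw_split[OF h(1)] by auto
  have "size X \<le> mx" using mw_size(2)[OF h(2)] .
  moreover have "\<forall>x. \<Delta>1 x + \<Delta>2 x \<subseteq># \<Delta> x" using g(3) h(3)
    by (metis sub_trans_addr subset_mset.order_trans)
  ultimately show ?thesis using g h X by (intro exI[of _ \<Delta>1] exI[of _ \<Delta>2] exI[of _ m1] exI[of _ m2]) auto
qed

lemma mw_split3:
  assumes "mw \<Delta> s M m" "M1 + M2 + M3 \<subseteq># M"
  shows "\<exists>\<Delta>1 \<Delta>2 \<Delta>3 m1 m2 m3. mw \<Delta>1 s M1 m1 \<and> mw \<Delta>2 s M2 m2 \<and> mw \<Delta>3 s M3 m3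
     \<and> (\<forall>x. \<Delta>1 x + \<Delta>2 x + \<Delta>3 x \<subseteq># \<Delta> x)
     \<and> m1 + m2 + m3 + size M \<le> m + size M1 + size M2 + size M3"
proof -
  obtain \<Delta>p \<Delta>3 mp m3 where h: "mw \<Delta>p s (M1 + M2) mp" "mw \<Delta>3 s M3 m3"
      "\<forall>x. \<Delta>p x + \<Delta>3 x \<subseteq># \<Delta> x" "mp + m3 + size M \<le> m + size (M1 + M2) + size M3"
    using mw_split2[OF assms] by blast
  obtain \<Delta>1 \<Delta>2 m1 m2 where g: "mw \<Delta>1 s M1 m1" "mw \<Delta>2 s M2 m2"
      "\<forall>x. \<Delta>1 x + \<Delta>2 x \<subseteq># \<Delta>p x" "mp = m1 + m2"
    using mw_split[OF h(1)] by auto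
  have "\<forall>x. \<Delta>1 x + \<Delta>2 x + \<Delta>3 x \<subseteq># \<Delta> x" using g(3) h(3)
    by (metis subset_mset.add_right_mono subset_mset.order_trans)
  then show ?thesis using g h
    by (intro exI[of _ \<Delta>1] exI[of _ \<Delta>2] exI[of _ \<Delta>3] exI[of _ m1] exI[of _ m2] exI[of _ m3]) auto
qed

lemma lift_tw:
  "tw \<Gamma> s \<sigma> n \<Longrightarrow> tw (env_ins k \<Gamma> {#}) (lift k s) \<sigma> n"
  "mw \<Gamma> s M n \<Longrightarrow> mw (env_ins k \<Gamma> {#}) (lift k s) M n"
proof (induction arbitrary: k and k rule: tw_mw.inducts)
  case (tw_var \<sigma> \<Gamma> x)
  show ?case
  proof (cases "x < k")
    case True
    then have "\<sigma> \<in># env_ins k \<Gamma> {#} x" using tw_var by (simp add: env_ins_def)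
    from tw_mw.tw_var[of \<sigma> "env_ins k \<Gamma> {#}" x, OF this] True show ?thesis by simp
  next
    case False
    then have "\<sigma> \<in># env_ins k \<Gamma> {#} (Suc x)" using tw_var by (simp add: env_ins_def)
    from tw_mw.tw_var[of \<sigma> "env_ins k \<Gamma> {#}" "Suc x", OF this] False show ?thesis by simp
  qed
next
  case (tw_abs \<Gamma> M t \<sigma> n)
  then show ?case using tw_abs.IH[of "Suc k"] by (auto simp: env_ext_ins intro!: tw_mw.tw_abs)
next
  case (tw_app \<Gamma>1 t ps \<tau>1 n1 \<Gamma>2 u \<tau>2 n2 \<Gamma>3 r \<sigma> n3 \<Gamma>)
  have r: "tw (env_ext (env_ins k \<Gamma>3 {#}) (mset (map snd ps))) (lift (Suc k) r) \<sigma> n3"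
    using tw_app.IH(3)[of "Suc k"] by (simp add: env_ext_ins)
  have "\<forall>x. env_ins k \<Gamma>1 {#} x + env_ins k \<Gamma>2 {#} x + env_ins k \<Gamma>3 {#} x \<subseteq># env_ins k \<Gamma> {#} x"
    using tw_app.hyps(4) by (simp add: env_ins_def)
  then show ?case using tw_mw.tw_app[OF tw_app.IH(1) tw_app.IH(2) r] by simp
next
  case (mw_nil \<Gamma> t)
  then show ?case by (simp add: tw_mw.mw_nil)
next
  case (mw_add \<Gamma>1 t M n1 \<Gamma>2 \<sigma> n2 \<Gamma>)
  have "\<forall>x. env_ins k \<Gamma>1 {#} x + env_ins k \<Gamma>2 {#} x \<subseteq># env_ins k \<Gamma> {#} x"
    using mw_add.hyps(3) by (simp add: env_ins_def)
  then show ?case using tw_mw.mw_add[OF mw_add.IH(1) mw_add.IH(2)] by simp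
qed

lemma lift0_mw: "mw \<Gamma> s M n \<Longrightarrow> mw (env_ext \<Gamma> {#}) (lift 0 s) M n"
  using lift_tw(2)[of \<Gamma> s M n 0] by (simp add: env_ins0)

lemma subst_tw:
  "tw \<Gamma> t \<sigma> n \<Longrightarrow> mw \<Delta> s (\<Gamma> k) m \<Longrightarrow> \<exists>n'. tw (\<lambda>x. env_del k \<Gamma> x + \<Delta> x) (subst t k s) \<sigma> n' \<and> n' + size (\<Gamma> k) \<le> n + m"
  "mw \<Gamma> t A n \<Longrightarrow> mw \<Delta> s (\<Gamma> k) m \<Longrightarrow> \<exists>n'. mw (\<lambda>x. env_del k \<Gamma> x + \<Delta> x) (subst t k s) A n' \<and> n' + size (\<Gamma> k) \<le> n + m"
proof (induction arbitrary: k \<Delta> s m and k \<Delta> s m rule: tw_mw.inducts)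
  case (tw_var \<sigma> \<Gamma> x)
  consider "x < k" | "x = k" | "x > k" by linarith
  then show ?case
  proof cases
    case 1
    have "\<sigma> \<in># (\<lambda>x. env_del k \<Gamma> x + \<Delta> x) x" using tw_var 1 by (simp add: env_del_def)
    from tw_mw.tw_var[of \<sigma> "\<lambda>x. env_del k \<Gamma> x + \<Delta> x" x, OF this] 1 mw_size(2)[OF tw_var.prems]
    show ?thesis by (intro exI[of _ 1]) auto
  next
    case 2
    have "{#\<sigma>#} + {#} \<subseteq># \<Gamma> k" using tw_var 2 by simp
    from mw_split2[OF tw_var.prems this] obtain \<Delta>1 \<Delta>2 m1 m2 where h: "mw \<Delta>1 s {#\<sigma>#} m1"
       "\<forall>x. \<Delta>1 x + \<Delta>2 x \<subseteq># \<Delta> x" "m1 + m2 + size (\<Gamma> k) \<le> m + 1" by auto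
    have "tw \<Delta>1 s \<sigma> m1" using h(1) by (rule mw_single)
    moreover have "\<forall>x. \<Delta>1 x \<subseteq># env_del k \<Gamma> x + \<Delta> x" using h(2)
      by (metis sub_trans_addr mset_subset_eq_add_right subset_mset.order_trans)
    ultimately have "tw (\<lambda>x. env_del k \<Gamma> x + \<Delta> x) s \<sigma> m1" by (rule weaken(1))
    then show ?thesis using h(3) 2 by (intro exI[of _ m1]) auto
  next
    case 3
    have "\<sigma> \<in># (\<lambda>x. env_del k \<Gamma> x + \<Delta> x) (x - 1)" using tw_var 3 by (cases x) (auto simp: env_del_def)
    from tw_mw.tw_var[of \<sigma> "\<lambda>x. env_del k \<Gamma> x + \<Delta> x" "x - 1", OF this] 3 mw_size(2)[OF tw_var.prems]
    show ?thesis by (intro exI[of _ 1]) auto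
  qed
next
  case (tw_abs \<Gamma> M t \<sigma> n)
  have "mw (env_ext \<Delta> {#}) (lift 0 s) (env_ext \<Gamma> M (Suc k)) m" using lift0_mw[OF tw_abs.prems] by simp
  from tw_abs.IH[OF this] obtain n' where
    h: "tw (\<lambda>x. env_del (Suc k) (env_ext \<Gamma> M) x + env_ext \<Delta> {#} x) (subst t (Suc k) (lift 0 s)) \<sigma> n'"
       "n' + size (\<Gamma> k) \<le> n + m" by auto
  have e: "(\<lambda>x. env_del (Suc k) (env_ext \<Gamma> M) x + env_ext \<Delta> {#} x) = env_ext (\<lambda>x. env_del k \<Gamma> x + \<Delta> x) M"
    using env_sum_ext[of "env_del k \<Gamma>" M \<Delta> "{#}"] by (simp add: env_del_ext)
  show ?case using tw_mw.tw_abs[of "\<lambda>x. env_del k \<Gamma> x + \<Delta> x" M "subst t (Suc k) (lift 0 s)" \<sigma> n'] h e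
    by (intro exI[of _ "Suc n'"]) auto
next
  case (tw_app \<Gamma>1 t ps \<tau>1 n1 \<Gamma>2 u \<tau>2 n2 \<Gamma>3 r \<sigma> n3 \<Gamma>)
  have "\<Gamma>1 k + \<Gamma>2 k + \<Gamma>3 k \<subseteq># \<Gamma> k" using tw_app.hyps(4) by blast
  from mw_split3[OF tw_app.prems this] obtain \<Delta>1 \<Delta>2 \<Delta>3 m1 m2 m3 where
    h: "mw \<Delta>1 s (\<Gamma>1 k) m1" "mw \<Delta>2 s (\<Gamma>2 k) m2" "mw \<Delta>3 s (\<Gamma>3 k) m3"
       "\<forall>x. \<Delta>1 x + \<Delta>2 x + \<Delta>3 x \<subseteq># \<Delta> x"
       "m1 + m2 + m3 + size (\<Gamma> k) \<le> m + size (\<Gamma>1 k) + size (\<Gamma>2 k) + size (\<Gamma>3 k)" by blast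
  from tw_app.IH(1)[OF h(1)] obtain n1' where
    h1: "mw (\<lambda>x. env_del k \<Gamma>1 x + \<Delta>1 x) (subst t k s) (ch (mset (map (\<lambda>(M, \<tau>). TArr M \<tau>) ps)) \<tau>1) n1'"
        "n1' + size (\<Gamma>1 k) \<le> n1 + m1" by blast
  from tw_app.IH(2)[OF h(2)] obtain n2' where
    h2: "mw (\<lambda>x. env_del k \<Gamma>2 x + \<Delta>2 x) (subst u k s) (ch (sum_list (map fst ps)) \<tau>2) n2'"
        "n2' + size (\<Gamma>2 k) \<le> n2 + m2" by blast
  have "mw (env_ext \<Delta>3 {#}) (lift 0 s) (env_ext \<Gamma>3 (mset (map snd ps)) (Suc k)) m3"
    using lift0_mw[OF h(3)] by simp
  from tw_app.IH(3)[OF this] obtain n3' where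
    h3: "tw (\<lambda>x. env_del (Suc k) (env_ext \<Gamma>3 (mset (map snd ps))) x + env_ext \<Delta>3 {#} x)
            (subst r (Suc k) (lift 0 s)) \<sigma> n3'"
        "n3' + size (\<Gamma>3 k) \<le> n3 + m3" by auto
  have e: "(\<lambda>x. env_del (Suc k) (env_ext \<Gamma>3 (mset (map snd ps))) x + env_ext \<Delta>3 {#} x)
     = env_ext (\<lambda>x. env_del k \<Gamma>3 x + \<Delta>3 x) (mset (map snd ps))"
    using env_sum_ext[of "env_del k \<Gamma>3" "mset (map snd ps)" \<Delta>3 "{#}"] by (simp add: env_del_ext)
  have c: "\<forall>x. (env_del k \<Gamma>1 x + \<Delta>1 x) + (env_del k \<Gamma>2 x + \<Delta>2 x) + (env_del k \<Gamma>3 x + \<Delta>3 x)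
     \<subseteq># env_del k \<Gamma> x + \<Delta> x"
  proof
    fix x
    have "env_del k \<Gamma>1 x + env_del k \<Gamma>2 x + env_del k \<Gamma>3 x \<subseteq># env_del k \<Gamma> x"
      using tw_app.hyps(4) by (simp add: env_del_def)
    then show "(env_del k \<Gamma>1 x + \<Delta>1 x) + (env_del k \<Gamma>2 x + \<Delta>2 x) + (env_del k \<Gamma>3 x + \<Delta>3 x)
     \<subseteq># env_del k \<Gamma> x + \<Delta> x" using h(4) by (intro mset3) auto
  qed
  from tw_mw.tw_app[OF h1(1) h2(1) h3(1)[unfolded e] c]
  show ?case using h(5) h1(2) h2(2) h3(2) by (intro exI[of _ "Suc (n1' + n2' + n3')"]) auto
next
  case (mw_nil \<Gamma> t)
  then show ?case using mw_size(2)[OF mw_nil] by (intro exI[of _ 0]) (auto intro: tw_mw.mw_nil)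
next
  case (mw_add \<Gamma>1 t M n1 \<Gamma>2 \<sigma> n2 \<Gamma>)
  have "\<Gamma>1 k + \<Gamma>2 k \<subseteq># \<Gamma> k" using mw_add.hyps(3) by blast
  from mw_split2[OF mw_add.prems this] obtain \<Delta>1 \<Delta>2 m1 m2 where
    h: "mw \<Delta>1 s (\<Gamma>1 k) m1" "mw \<Delta>2 s (\<Gamma>2 k) m2"
       "\<forall>x. \<Delta>1 x + \<Delta>2 x \<subseteq># \<Delta> x"
       "m1 + m2 + size (\<Gamma> k) \<le> m + size (\<Gamma>1 k) + size (\<Gamma>2 k)" by blast
  from mw_add.IH(1)[OF h(1)] obtain n1' where
    h1: "mw (\<lambda>x. env_del k \<Gamma>1 x + \<Delta>1 x) (subst t k s) M n1'" "n1' + size (\<Gamma>1 k) \<le> n1 + m1" by blast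
  from mw_add.IH(2)[OF h(2)] obtain n2' where
    h2: "tw (\<lambda>x. env_del k \<Gamma>2 x + \<Delta>2 x) (subst t k s) \<sigma> n2'" "n2' + size (\<Gamma>2 k) \<le> n2 + m2" by blast
  have c: "\<forall>x. (env_del k \<Gamma>1 x + \<Delta>1 x) + (env_del k \<Gamma>2 x + \<Delta>2 x) \<subseteq># env_del k \<Gamma> x + \<Delta> x"
  proof
    fix x
    have "env_del k \<Gamma>1 x + env_del k \<Gamma>2 x \<subseteq># env_del k \<Gamma> x"
      using mw_add.hyps(3) by (simp add: env_del_def)
    then show "(env_del k \<Gamma>1 x + \<Delta>1 x) + (env_del k \<Gamma>2 x + \<Delta>2 x) \<subseteq># env_del k \<Gamma> x + \<Delta> x"
      using h(3) by (intro mset2) auto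
  qed
  from tw_mw.mw_add[OF h1(1) h2(1) c]
  show ?case using h(4) h1(2) h2(2) by (intro exI[of _ "n1' + n2'"]) auto
qed

lemma ch_mw: "mw \<Gamma> u (ch B \<tau>) n \<Longrightarrow> \<exists>n'\<le>n. mw \<Gamma> u B n'"
  by (cases "B = {#}") (auto simp: ch_def intro: tw_mw.mw_nil)

lemma size_ch: "1 \<le> size (ch M \<tau>)"
  by (simp add: ch_def Suc_le_eq nonempty_has_size)

lemma mw_step:
  assumes "\<forall>\<Gamma> \<sigma> n. tw \<Gamma> t \<sigma> n \<longrightarrow> (\<exists>n'. tw \<Gamma> t' \<sigma> n' \<and> n' + d \<le> n)"
  shows "mw \<Gamma> t M n \<Longrightarrow> \<exists>n'. mw \<Gamma> t' M n' \<and> n' + d * size M \<le> n"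
proof (induction M arbitrary: \<Gamma> n)
  case empty
  then show ?case by (auto intro: tw_mw.mw_nil)
next
  case (add a M)
  then obtain \<Gamma>a \<Gamma>b na nb where h: "tw \<Gamma>a t a na" "mw \<Gamma>b t M nb"
      "\<forall>x. \<Gamma>a x + \<Gamma>b x \<subseteq># \<Gamma> x" "n = na + nb"
    using mw_addE'[of \<Gamma> t a M n] by auto
  from add.IH[OF h(2)] obtain nb' where g: "mw \<Gamma>b t' M nb'" "nb' + d * size M \<le> nb" by blast
  from assms h(1) obtain na' where f: "tw \<Gamma>a t' a na'" "na' + d \<le> na" by blast
  have "mw \<Gamma> t' (add_mset a M) (nb' + na')"
    by (rule tw_mw.mw_add[OF g(1) f(1)]) (use h(3) in \<open>simp add: add.commute\<close>)
  then show ?case using g(2) f(2) h(4) by (intro exI[of _ "nb' + na'"]) auto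
qed

lemma beta_multi:
  "mw \<Gamma>1 (JLam t) (mset (map (\<lambda>(M, \<tau>). TArr M \<tau>) ps)) n1 \<Longrightarrow> mw \<Gamma>2 u (sum_list (map fst ps)) n2 \<Longrightarrow>
   \<exists>\<Gamma>' n'. mw \<Gamma>' (subst t 0 u) (mset (map snd ps)) n' \<and> (\<forall>x. \<Gamma>' x \<subseteq># \<Gamma>1 x + \<Gamma>2 x) \<and> n' + length ps \<le> n1 + n2"
proof (induction ps arbitrary: \<Gamma>1 n1 \<Gamma>2 n2)
  case Nil
  then show ?case by (intro exI[of _ "\<lambda>_. {#}"] exI[of _ 0]) (auto intro: tw_mw.mw_nil)
next
  case (Cons p ps)
  obtain M \<tau> where p: "p = (M, \<tau>)" by fastforce
  have "mw \<Gamma>1 (JLam t) (add_mset (TArr M \<tau>) (mset (map (\<lambda>(M, \<tau>). TArr M \<tau>) ps))) n1"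
    using Cons.prems(1) p by simp
  from mw_addE'[OF this] obtain \<Gamma>a \<Gamma>b na nb where h: "tw \<Gamma>a (JLam t) (TArr M \<tau>) na"
     "mw \<Gamma>b (JLam t) (mset (map (\<lambda>(M, \<tau>). TArr M \<tau>) ps)) nb"
      "\<forall>x. \<Gamma>a x + \<Gamma>b x \<subseteq># \<Gamma>1 x" "n1 = na + nb" by blast
  from h(1) obtain n0 where l: "tw (env_ext \<Gamma>a M) t \<tau> n0" "na = Suc n0"
    by (auto elim: twLamE)
  have "mw \<Gamma>2 u (M + sum_list (map fst ps)) n2" using Cons.prems(2) p by simp
  from mw_split[OF this] obtain \<Delta>1 \<Delta>2 m1 m2 where g: "mw \<Delta>1 u M m1" "mw \<Delta>2 u (sum_list (map fst ps)) m2"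
      "\<forall>x. \<Delta>1 x + \<Delta>2 x \<subseteq># \<Gamma>2 x" "n2 = m1 + m2" by blast
  from subst_tw(1)[OF l(1), of \<Delta>1 u 0 m1] g(1) obtain n0' where
    s: "tw (\<lambda>x. \<Gamma>a x + \<Delta>1 x) (subst t 0 u) \<tau> n0'" "n0' + size M \<le> n0 + m1"
    by (auto simp: env_del0_ext)
  from Cons.IH[OF h(2) g(2)] obtain \<Gamma>'' nr where i: "mw \<Gamma>'' (subst t 0 u) (mset (map snd ps)) nr"
     "\<forall>x. \<Gamma>'' x \<subseteq># \<Gamma>b x + \<Delta>2 x" "nr + length ps \<le> nb + m2" by blast
  have "mw (\<lambda>x. \<Gamma>'' x + (\<Gamma>a x + \<Delta>1 x)) (subst t 0 u) (add_mset \<tau> (mset (map snd ps))) (nr + n0')"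
    by (rule tw_mw.mw_add[OF i(1) s(1)]) simp
  moreover have "\<forall>x. \<Gamma>'' x + (\<Gamma>a x + \<Delta>1 x) \<subseteq># \<Gamma>1 x + \<Gamma>2 x"
  proof
    fix x
    have "\<Gamma>'' x + (\<Gamma>a x + \<Delta>1 x) \<subseteq># (\<Gamma>b x + \<Delta>2 x) + (\<Gamma>a x + \<Delta>1 x)"
      using i(2) by (simp add: subset_mset.add_right_mono)
    also have "\<dots> = (\<Gamma>a x + \<Gamma>b x) + (\<Delta>1 x + \<Delta>2 x)" by (simp add: ac_simps)
    also have "\<dots> \<subseteq># \<Gamma>1 x + \<Gamma>2 x" using h(3) g(3) by (simp add: sub_add_both)
    finally show "\<Gamma>'' x + (\<Gamma>a x + \<Delta>1 x) \<subseteq># \<Gamma>1 x + \<Gamma>2 x" .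
  qed
  ultimately show ?case using p i(3) s(2) h(4) l(2) g(4)
    by (intro exI[of _ "\<lambda>x. \<Gamma>'' x + (\<Gamma>a x + \<Delta>1 x)"] exI[of _ "nr + n0'"]) auto
qed

lemma beta_tw: "beta t t' \<Longrightarrow> tw \<Gamma> t \<sigma> n \<Longrightarrow> \<exists>n'. tw \<Gamma> t' \<sigma> n' \<and> n' + 1 \<le> n"
proof (induction arbitrary: \<Gamma> \<sigma> n rule: beta.induct)
  case (beta_root t u r)
  from beta_root obtain \<Gamma>1 ps \<tau>1 n1 \<Gamma>2 \<tau>2 n2 \<Gamma>3 n3 where
    a: "mw \<Gamma>1 (JLam t) (ch (mset (map (\<lambda>(M, \<tau>). TArr M \<tau>) ps)) \<tau>1) n1"
       "mw \<Gamma>2 u (ch (sum_list (map fst ps)) \<tau>2) n2"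
       "tw (env_ext \<Gamma>3 (mset (map snd ps))) r \<sigma> n3"
       "\<forall>x. \<Gamma>1 x + \<Gamma>2 x + \<Gamma>3 x \<subseteq># \<Gamma> x" "n = Suc (n1 + n2 + n3)"
    by (auto elim!: twAppE)
  have g3: "\<forall>x. \<Gamma>3 x \<subseteq># \<Gamma> x" using a(4) by (metis sub_trans_addl)
  show ?case
  proof (cases "ps = []")
    case True
    have "mw (\<lambda>_. {#}) (subst t 0 u) (env_ext \<Gamma>3 (mset (map snd ps)) 0) 0"
      using True by (simp add: tw_mw.mw_nil)
    from subst_tw(1)[OF a(3) this] obtain n' where
      s: "tw \<Gamma>3 (subst r 0 (subst t 0 u)) \<sigma> n'" "n' \<le> n3"
      using True by (auto simp: env_del0_ext)
    show ?thesis using weaken(1)[OF s(1) g3] s(2) a(5) by (intro exI[of _ n']) auto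
  next
    case False
    then have "mset (map (\<lambda>(M, \<tau>). TArr M \<tau>) ps) \<noteq> {#}" by simp
    then have a1: "mw \<Gamma>1 (JLam t) (mset (map (\<lambda>(M, \<tau>). TArr M \<tau>) ps)) n1" using a(1) by (simp add: ch_def)
    from ch_mw[OF a(2)] obtain n2' where a2: "mw \<Gamma>2 u (sum_list (map fst ps)) n2'" "n2' \<le> n2" by blast
    from beta_multi[OF a1 a2(1)] obtain \<Gamma>' n' where
      b: "mw \<Gamma>' (subst t 0 u) (mset (map snd ps)) n'" "\<forall>x. \<Gamma>' x \<subseteq># \<Gamma>1 x + \<Gamma>2 x"
         "n' + length ps \<le> n1 + n2'" by blast
    from subst_tw(1)[OF a(3), of \<Gamma>' "subst t 0 u" 0 n'] b(1) obtain n'' where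
      s: "tw (\<lambda>x. \<Gamma>3 x + \<Gamma>' x) (subst r 0 (subst t 0 u)) \<sigma> n''" "n'' + length ps \<le> n3 + n'"
      by (auto simp: env_del0_ext)
    have "\<forall>x. \<Gamma>3 x + \<Gamma>' x \<subseteq># \<Gamma> x"
    proof
      fix x
      have "\<Gamma>3 x + \<Gamma>' x \<subseteq># \<Gamma>3 x + (\<Gamma>1 x + \<Gamma>2 x)" using b(2) by (simp add: subset_mset.add_left_mono)
      also have "\<dots> = \<Gamma>1 x + \<Gamma>2 x + \<Gamma>3 x" by (simp add: ac_simps)
      also have "\<dots> \<subseteq># \<Gamma> x" using a(4) by blast
      finally show "\<Gamma>3 x + \<Gamma>' x \<subseteq># \<Gamma> x" .
    qed
    from weaken(1)[OF s(1) this] show ?thesis using s(2) b(3) a2(2) a(5) False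
      by (intro exI[of _ n'']) (auto simp: neq_Nil_conv)
  qed
next
  case (beta_lam t t')
  from beta_lam.prems obtain M \<sigma>' n0 where l: "\<sigma> = TArr M \<sigma>'" "n = Suc n0" "tw (env_ext \<Gamma> M) t \<sigma>' n0"
    by (auto elim: twLamE)
  from beta_lam.IH[OF l(3)] obtain n' where "tw (env_ext \<Gamma> M) t' \<sigma>' n'" "n' + 1 \<le> n0" by blast
  then show ?case using l by (intro exI[of _ "Suc n'"]) (auto intro: tw_mw.tw_abs)
next
  case (beta_app1 t t' u r)
  from beta_app1.prems obtain \<Gamma>1 ps \<tau>1 n1 \<Gamma>2 \<tau>2 n2 \<Gamma>3 n3 where
    a: "mw \<Gamma>1 t (ch (mset (map (\<lambda>(M, \<tau>). TArr M \<tau>) ps)) \<tau>1) n1"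
       "mw \<Gamma>2 u (ch (sum_list (map fst ps)) \<tau>2) n2"
       "tw (env_ext \<Gamma>3 (mset (map snd ps))) r \<sigma> n3"
       "\<forall>x. \<Gamma>1 x + \<Gamma>2 x + \<Gamma>3 x \<subseteq># \<Gamma> x" "n = Suc (n1 + n2 + n3)"
    by (auto elim!: twAppE)
  from mw_step[of t t' 1, OF _ a(1)] beta_app1.IH obtain n1' where
    f: "mw \<Gamma>1 t' (ch (mset (map (\<lambda>(M, \<tau>). TArr M \<tau>) ps)) \<tau>1) n1'"
    "n1' + size (ch (mset (map (\<lambda>(M, \<tau>). TArr M \<tau>) ps)) \<tau>1) \<le> n1" by auto
  have "tw \<Gamma> (JApp t' u r) \<sigma> (Suc (n1' + n2 + n3))" by (rule tw_mw.tw_app[OF f(1) a(2) a(3) a(4)])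
  then show ?case using a(5) f(2) size_ch[of "mset (map (\<lambda>(M, \<tau>). TArr M \<tau>) ps)" \<tau>1]
    by (intro exI[of _ "Suc (n1' + n2 + n3)"]) auto
next
  case (beta_app2 u u' t r)
  from beta_app2.prems obtain \<Gamma>1 ps \<tau>1 n1 \<Gamma>2 \<tau>2 n2 \<Gamma>3 n3 where
    a: "mw \<Gamma>1 t (ch (mset (map (\<lambda>(M, \<tau>). TArr M \<tau>) ps)) \<tau>1) n1"
       "mw \<Gamma>2 u (ch (sum_list (map fst ps)) \<tau>2) n2"
       "tw (env_ext \<Gamma>3 (mset (map snd ps))) r \<sigma> n3"
       "\<forall>x. \<Gamma>1 x + \<Gamma>2 x + \<Gamma>3 x \<subseteq># \<Gamma> x" "n = Suc (n1 + n2 + n3)"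
    by (auto elim!: twAppE)
  from mw_step[of u u' 1, OF _ a(2)] beta_app2.IH obtain n2' where
    f: "mw \<Gamma>2 u' (ch (sum_list (map fst ps)) \<tau>2) n2'"
    "n2' + size (ch (sum_list (map fst ps)) \<tau>2) \<le> n2" by auto
  have "tw \<Gamma> (JApp t u' r) \<sigma> (Suc (n1 + n2' + n3))" by (rule tw_mw.tw_app[OF a(1) f(1) a(3) a(4)])
  then show ?case using a(5) f(2) size_ch[of "sum_list (map fst ps)" \<tau>2]
    by (intro exI[of _ "Suc (n1 + n2' + n3)"]) auto
next
  case (beta_app3 r r' t u)
  from beta_app3.prems obtain \<Gamma>1 ps \<tau>1 n1 \<Gamma>2 \<tau>2 n2 \<Gamma>3 n3 where
    a: "mw \<Gamma>1 t (ch (mset (map (\<lambda>(M, \<tau>). TArr M \<tau>) ps)) \<tau>1) n1"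
       "mw \<Gamma>2 u (ch (sum_list (map fst ps)) \<tau>2) n2"
       "tw (env_ext \<Gamma>3 (mset (map snd ps))) r \<sigma> n3"
       "\<forall>x. \<Gamma>1 x + \<Gamma>2 x + \<Gamma>3 x \<subseteq># \<Gamma> x" "n = Suc (n1 + n2 + n3)"
    by (auto elim!: twAppE)
  from beta_app3.IH[OF a(3)] obtain n3' where
    "tw (env_ext \<Gamma>3 (mset (map snd ps))) r' \<sigma> n3'" "n3' + 1 \<le> n3" by auto
  then show ?case using tw_mw.tw_app[OF a(1) a(2) _ a(4)] a(5)
    by (intro exI[of _ "Suc (n1 + n2 + n3')"]) fastforce
qed

lemma sub_add_r: "\<forall>x. (A x :: ty multiset) \<subseteq># B x \<Longrightarrow> \<forall>x. A x \<subseteq># B x + C x"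
  by (metis mset_subset_eq_add_left subset_mset.order_trans)

lemma sub_add_l: "\<forall>x. (A x :: ty multiset) \<subseteq># C x \<Longrightarrow> \<forall>x. A x \<subseteq># B x + C x"
  by (metis mset_subset_eq_add_right subset_mset.order_trans)

lemma ch_merge:
  assumes "mw \<Gamma>1 X (ch M1 \<tau>1) n1" "mw \<Gamma>2 X (ch M2 \<tau>2) n2"
  shows "\<exists>\<tau> n. mw (\<lambda>x. \<Gamma>1 x + \<Gamma>2 x) X (ch (M1 + M2) \<tau>) n \<and> n \<le> n1 + n2"
proof -
  have w1: "mw (\<lambda>x. \<Gamma>1 x + \<Gamma>2 x) X (ch M1 \<tau>1) n1" by (rule weaken(2)[OF assms(1)]) simp
  have w2: "mw (\<lambda>x. \<Gamma>1 x + \<Gamma>2 x) X (ch M2 \<tau>2) n2" by (rule weaken(2)[OF assms(2)]) simp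
  show ?thesis
  proof (cases "M1 = {#}")
    case True
    then show ?thesis
    proof (cases "M2 = {#}")
      case True
      then show ?thesis using w1 \<open>M1 = {#}\<close> by (intro exI[of _ \<tau>1] exI[of _ n1]) (simp add: ch_def)
    next
      case False
      then show ?thesis using w2 \<open>M1 = {#}\<close> by (intro exI[of _ \<tau>2] exI[of _ n2]) (simp add: ch_def)
    qed
  next
    case False
    then show ?thesis
    proof (cases "M2 = {#}")
      case True
      then show ?thesis using w1 \<open>M1 \<noteq> {#}\<close> by (intro exI[of _ \<tau>1] exI[of _ n1]) (simp add: ch_def)
    next
      case False
      then show ?thesis using mw_union[OF assms] \<open>M1 \<noteq> {#}\<close>
        by (intro exI[of _ \<tau>1] exI[of _ "n1 + n2"]) (simp add: ch_def)
    qed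
  qed
qed

lemma pi_aux:
  "mw \<Gamma>1 (JApp t u r) R n1 \<Longrightarrow> R \<noteq> {#} \<Longrightarrow>
   \<exists>ps \<tau>t \<tau>u \<Gamma>t \<Gamma>u \<Gamma>r nt nu nr.
     mw \<Gamma>t t (ch (mset (map (\<lambda>(M, \<tau>). TArr M \<tau>) ps)) \<tau>t) nt \<and>
     mw \<Gamma>u u (ch (sum_list (map fst ps)) \<tau>u) nu \<and>
     mw (env_ext \<Gamma>r (mset (map snd ps))) r R nr \<and>
     (\<forall>x. \<Gamma>t x + \<Gamma>u x + \<Gamma>r x \<subseteq># \<Gamma>1 x) \<and> nt + nu + nr + 1 \<le> n1"
proof (induction R arbitrary: \<Gamma>1 n1)
  case empty
  then show ?case by simp
next
  case (add a R)
  from mw_addE'[OF add.prems(1)] obtain \<Gamma>a \<Gamma>b na nb where h: "tw \<Gamma>a (JApp t u r) a na"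
     "mw \<Gamma>b (JApp t u r) R nb" "\<forall>x. \<Gamma>a x + \<Gamma>b x \<subseteq># \<Gamma>1 x" "n1 = na + nb" by blast
  from h(1) obtain G1 ps \<tau>1 k1 G2 \<tau>2 k2 G3 k3 where
    a: "mw G1 t (ch (mset (map (\<lambda>(M, \<tau>). TArr M \<tau>) ps)) \<tau>1) k1"
       "mw G2 u (ch (sum_list (map fst ps)) \<tau>2) k2"
       "tw (env_ext G3 (mset (map snd ps))) r a k3"
       "\<forall>x. G1 x + G2 x + G3 x \<subseteq># \<Gamma>a x" "na = Suc (k1 + k2 + k3)"
    by (auto elim!: twAppE)
  have ga: "\<forall>x. \<Gamma>a x \<subseteq># \<Gamma>1 x" using h(3) by (metis sub_trans_addr)
  show ?case
  proof (cases "R = {#}")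
    case True
    have "mw (env_ext G3 (mset (map snd ps))) r (add_mset a R) k3" using tw_mw1[OF a(3)] True by simp
    moreover have "\<forall>x. G1 x + G2 x + G3 x \<subseteq># \<Gamma>1 x" using a(4) ga by (metis subset_mset.order_trans)
    ultimately show ?thesis using a(1,2,5) h(4)
      by (intro exI[of _ ps] exI[of _ \<tau>1] exI[of _ \<tau>2] exI[of _ G1] exI[of _ G2] exI[of _ G3]
          exI[of _ k1] exI[of _ k2] exI[of _ k3]) auto
  next
    case False
    from add.IH[OF h(2) False] obtain ps' \<tau>t \<tau>u \<Gamma>t \<Gamma>u \<Gamma>r nt nu nr where
      i: "mw \<Gamma>t t (ch (mset (map (\<lambda>(M, \<tau>). TArr M \<tau>) ps')) \<tau>t) nt"
     "mw \<Gamma>u u (ch (sum_list (map fst ps')) \<tau>u) nu"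
     "mw (env_ext \<Gamma>r (mset (map snd ps'))) r R nr"
     "\<forall>x. \<Gamma>t x + \<Gamma>u x + \<Gamma>r x \<subseteq># \<Gamma>b x" "nt + nu + nr + 1 \<le> nb" by blast
    from ch_merge[OF i(1) a(1)] obtain \<tau>t' nt' where
      mt: "mw (\<lambda>x. \<Gamma>t x + G1 x) t (ch (mset (map (\<lambda>(M, \<tau>). TArr M \<tau>) (ps' @ ps))) \<tau>t') nt'" "nt' \<le> nt + k1"
      by auto
    from ch_merge[OF i(2) a(2)] obtain \<tau>u' nu' where
      mu: "mw (\<lambda>x. \<Gamma>u x + G2 x) u (ch (sum_list (map fst (ps' @ ps))) \<tau>u') nu'" "nu' \<le> nu + k2"
      by auto
    have mr: "mw (env_ext (\<lambda>x. \<Gamma>r x + G3 x) (mset (map snd (ps' @ ps)))) r (add_mset a R) (nr + k3)"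
      by (rule tw_mw.mw_add[OF i(3) a(3)]) (simp add: env_ext_def split: nat.split)
    have c: "\<forall>x. (\<Gamma>t x + G1 x) + (\<Gamma>u x + G2 x) + (\<Gamma>r x + G3 x) \<subseteq># \<Gamma>1 x"
    proof
      fix x
      have "(\<Gamma>t x + G1 x) + (\<Gamma>u x + G2 x) + (\<Gamma>r x + G3 x) \<subseteq># \<Gamma>b x + \<Gamma>a x"
        using i(4) a(4) by (intro mset3) auto
      also have "\<dots> \<subseteq># \<Gamma>1 x" using h(3) by (simp add: add.commute)
      finally show "(\<Gamma>t x + G1 x) + (\<Gamma>u x + G2 x) + (\<Gamma>r x + G3 x) \<subseteq># \<Gamma>1 x" .
    qed
    show ?thesis using mt mu mr c i(5) a(5) h(4)
      by (intro exI[of _ "ps' @ ps"] exI[of _ \<tau>t'] exI[of _ \<tau>u'] exI[of _ "\<lambda>x. \<Gamma>t x + G1 x"]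
          exI[of _ "\<lambda>x. \<Gamma>u x + G2 x"] exI[of _ "\<lambda>x. \<Gamma>r x + G3 x"]
          exI[of _ nt'] exI[of _ nu'] exI[of _ "nr + k3"]) auto
  qed
qed

lemma pi_tw: "pi t t' \<Longrightarrow> tw \<Gamma> t \<sigma> n \<Longrightarrow> \<exists>n'. tw \<Gamma> t' \<sigma> n' \<and> n' + 0 \<le> n"
proof (induction arbitrary: \<Gamma> \<sigma> n rule: pi.induct)
  case (pi_root t u r u' r')
  from pi_root obtain \<Gamma>1 ps \<tau>1 n1 \<Gamma>2 \<tau>2 n2 \<Gamma>3 n3 where
    a: "mw \<Gamma>1 (JApp t u r) (ch (mset (map (\<lambda>(M, \<tau>). TArr M \<tau>) ps)) \<tau>1) n1"
       "mw \<Gamma>2 u' (ch (sum_list (map fst ps)) \<tau>2) n2"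
       "tw (env_ext \<Gamma>3 (mset (map snd ps))) r' \<sigma> n3"
       "\<forall>x. \<Gamma>1 x + \<Gamma>2 x + \<Gamma>3 x \<subseteq># \<Gamma> x" "n = Suc (n1 + n2 + n3)"
    by (auto elim!: twAppE)
  from pi_aux[OF a(1) ch_ne] obtain ps' \<tau>t \<tau>u \<Gamma>t \<Gamma>u \<Gamma>r nt nu nr where
    i: "mw \<Gamma>t t (ch (mset (map (\<lambda>(M, \<tau>). TArr M \<tau>) ps')) \<tau>t) nt"
     "mw \<Gamma>u u (ch (sum_list (map fst ps')) \<tau>u) nu"
     "mw (env_ext \<Gamma>r (mset (map snd ps'))) r (ch (mset (map (\<lambda>(M, \<tau>). TArr M \<tau>) ps)) \<tau>1) nr"
     "\<forall>x. \<Gamma>t x + \<Gamma>u x + \<Gamma>r x \<subseteq># \<Gamma>1 x" "nt + nu + nr + 1 \<le> n1" by blast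
  have lu: "mw (env_ext \<Gamma>2 {#}) (lift 0 u') (ch (sum_list (map fst ps)) \<tau>2) n2" by (rule lift0_mw[OF a(2)])
  have lr: "tw (env_ext (env_ext \<Gamma>3 {#}) (mset (map snd ps))) (lift 1 r') \<sigma> n3"
    using lift_tw(1)[OF a(3), of 1] by (simp add: env_ext_ins[symmetric] env_ins0)
  have inner: "tw (env_ext (\<lambda>x. \<Gamma>r x + \<Gamma>2 x + \<Gamma>3 x) (mset (map snd ps')))
     (JApp r (lift 0 u') (lift 1 r')) \<sigma> (Suc (nr + n2 + n3))"
    by (rule tw_mw.tw_app[OF i(3) lu lr]) (simp add: env_ext_def split: nat.split)
  have c: "\<forall>x. \<Gamma>t x + \<Gamma>u x + (\<Gamma>r x + \<Gamma>2 x + \<Gamma>3 x) \<subseteq># \<Gamma> x"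
  proof
    fix x
    have "\<Gamma>t x + \<Gamma>u x + (\<Gamma>r x + \<Gamma>2 x + \<Gamma>3 x) = (\<Gamma>t x + \<Gamma>u x + \<Gamma>r x) + \<Gamma>2 x + \<Gamma>3 x"
      by (simp add: ac_simps)
    also have "\<dots> \<subseteq># \<Gamma>1 x + \<Gamma>2 x + \<Gamma>3 x" using i(4) by (simp add: subset_mset.add_right_mono)
    also have "\<dots> \<subseteq># \<Gamma> x" using a(4) by blast
    finally show "\<Gamma>t x + \<Gamma>u x + (\<Gamma>r x + \<Gamma>2 x + \<Gamma>3 x) \<subseteq># \<Gamma> x" .
  qed
  have "tw \<Gamma> (JApp t u (JApp r (lift 0 u') (lift 1 r'))) \<sigma> (Suc (nt + nu + Suc (nr + n2 + n3)))"
    by (rule tw_mw.tw_app[OF i(1) i(2) inner c])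
  then show ?case using i(5) a(5) by (intro exI[of _ "Suc (nt + nu + Suc (nr + n2 + n3))"]) auto
next
  case (pi_lam t t')
  from pi_lam.prems obtain M \<sigma>' n0 where l: "\<sigma> = TArr M \<sigma>'" "n = Suc n0" "tw (env_ext \<Gamma> M) t \<sigma>' n0"
    by (auto elim: twLamE)
  from pi_lam.IH[OF l(3)] obtain n' where "tw (env_ext \<Gamma> M) t' \<sigma>' n'" "n' \<le> n0" by auto
  then show ?case using l by (intro exI[of _ "Suc n'"]) (auto intro: tw_mw.tw_abs)
next
  case (pi_app1 t t' u r)
  from pi_app1.prems obtain \<Gamma>1 ps \<tau>1 n1 \<Gamma>2 \<tau>2 n2 \<Gamma>3 n3 where
    a: "mw \<Gamma>1 t (ch (mset (map (\<lambda>(M, \<tau>). TArr M \<tau>) ps)) \<tau>1) n1"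
       "mw \<Gamma>2 u (ch (sum_list (map fst ps)) \<tau>2) n2"
       "tw (env_ext \<Gamma>3 (mset (map snd ps))) r \<sigma> n3"
       "\<forall>x. \<Gamma>1 x + \<Gamma>2 x + \<Gamma>3 x \<subseteq># \<Gamma> x" "n = Suc (n1 + n2 + n3)"
    by (auto elim!: twAppE)
  from mw_step[of t t' 0, OF _ a(1)] pi_app1.IH obtain n1' where
    f: "mw \<Gamma>1 t' (ch (mset (map (\<lambda>(M, \<tau>). TArr M \<tau>) ps)) \<tau>1) n1'" "n1' \<le> n1" by auto
  have "tw \<Gamma> (JApp t' u r) \<sigma> (Suc (n1' + n2 + n3))" by (rule tw_mw.tw_app[OF f(1) a(2) a(3) a(4)])
  then show ?case using a(5) f(2) by (intro exI[of _ "Suc (n1' + n2 + n3)"]) auto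
next
  case (pi_app2 u u' t r)
  from pi_app2.prems obtain \<Gamma>1 ps \<tau>1 n1 \<Gamma>2 \<tau>2 n2 \<Gamma>3 n3 where
    a: "mw \<Gamma>1 t (ch (mset (map (\<lambda>(M, \<tau>). TArr M \<tau>) ps)) \<tau>1) n1"
       "mw \<Gamma>2 u (ch (sum_list (map fst ps)) \<tau>2) n2"
       "tw (env_ext \<Gamma>3 (mset (map snd ps))) r \<sigma> n3"
       "\<forall>x. \<Gamma>1 x + \<Gamma>2 x + \<Gamma>3 x \<subseteq># \<Gamma> x" "n = Suc (n1 + n2 + n3)"
    by (auto elim!: twAppE)
  from mw_step[of u u' 0, OF _ a(2)] pi_app2.IH obtain n2' where
    f: "mw \<Gamma>2 u' (ch (sum_list (map fst ps)) \<tau>2) n2'" "n2' \<le> n2" by auto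
  have "tw \<Gamma> (JApp t u' r) \<sigma> (Suc (n1 + n2' + n3))" by (rule tw_mw.tw_app[OF a(1) f(1) a(3) a(4)])
  then show ?case using a(5) f(2) by (intro exI[of _ "Suc (n1 + n2' + n3)"]) auto
next
  case (pi_app3 r r' t u)
  from pi_app3.prems obtain \<Gamma>1 ps \<tau>1 n1 \<Gamma>2 \<tau>2 n2 \<Gamma>3 n3 where
    a: "mw \<Gamma>1 t (ch (mset (map (\<lambda>(M, \<tau>). TArr M \<tau>) ps)) \<tau>1) n1"
       "mw \<Gamma>2 u (ch (sum_list (map fst ps)) \<tau>2) n2"
       "tw (env_ext \<Gamma>3 (mset (map snd ps))) r \<sigma> n3"
       "\<forall>x. \<Gamma>1 x + \<Gamma>2 x + \<Gamma>3 x \<subseteq># \<Gamma> x" "n = Suc (n1 + n2 + n3)"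
    by (auto elim!: twAppE)
  from pi_app3.IH[OF a(3)] obtain n3' where
    f: "tw (env_ext \<Gamma>3 (mset (map snd ps))) r' \<sigma> n3'" "n3' \<le> n3" by auto
  have "tw \<Gamma> (JApp t u r') \<sigma> (Suc (n1 + n2 + n3'))" by (rule tw_mw.tw_app[OF a(1) a(2) f(1) a(4)])
  then show ?case using a(5) f(2) by (intro exI[of _ "Suc (n1 + n2 + n3')"]) auto
qed

fun pm :: "trm \<Rightarrow> nat" where
  "pm (JVar _) = 1"
| "pm (JLam t) = Suc (pm t)"
| "pm (JApp t u r) = Suc (2 * pm t + pm u + pm r)"

lemma pm_lift[simp]: "pm (lift k t) = pm t"
  by (induction t arbitrary: k) auto

lemma pm_pos: "1 \<le> pm t" by (cases t) auto

lemma pi_pm: "pi t t' \<Longrightarrow> pm t' < pm t"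
  by (induction rule: pi.induct) (auto simp: pm_pos)

lemma tw_SN: "tw \<Gamma> t \<sigma> n \<Longrightarrow> Wellfounded.accp (\<lambda>t' t. beta_pi t t') t"
proof (induction n arbitrary: \<Gamma> t \<sigma> rule: less_induct)
  case (less n)
  note outer = less.IH
  have "\<forall>t \<Gamma> \<sigma>. pm t = k \<longrightarrow> tw \<Gamma> t \<sigma> n \<longrightarrow> Wellfounded.accp (\<lambda>t' t. beta_pi t t') t" for k
  proof (induction k rule: less_induct)
    case (less k)
    show ?case
    proof (intro allI impI)
      fix t \<Gamma> \<sigma> assume k: "pm t = k" and tt: "tw \<Gamma> t \<sigma> n"
      show "Wellfounded.accp (\<lambda>t' t. beta_pi t t') t"
      proof (rule accpI)
        fix t' assume "beta_pi t t'"
        then consider "beta t t'" | "pi t t'" unfolding beta_pi_def by blast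
        then show "Wellfounded.accp (\<lambda>t' t. beta_pi t t') t'"
        proof cases
          case 1
          from beta_tw[OF 1 tt] obtain n' where "tw \<Gamma> t' \<sigma> n'" "n' < n" by auto
          then show ?thesis using outer by blast
        next
          case 2
          from pi_tw[OF 2 tt] obtain n' where "tw \<Gamma> t' \<sigma> n'" "n' \<le> n" by auto
          then show ?thesis
          proof (cases "n' < n")
            case True
            then show ?thesis using outer \<open>tw \<Gamma> t' \<sigma> n'\<close> by blast
          next
            case False
            then have "n' = n" using \<open>n' \<le> n\<close> by simp
            then show ?thesis using less.IH \<open>tw \<Gamma> t' \<sigma> n'\<close> pi_pm[OF 2] k by blast
          qed
        qed
      qed
    qed
  qed
  then show ?case using less.prems by blast
qed

lemma typing_tw:
  "typing \<Gamma> t \<sigma> \<Longrightarrow> \<exists>n. tw \<Gamma> t \<sigma> n"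
  "mtyping \<Gamma> t M \<Longrightarrow> \<exists>n. mw \<Gamma> t M n"
proof (induction rule: typing_mtyping.inducts)
  case (t_var x \<sigma>)
  have "\<sigma> \<in># env_single x \<sigma> x" by (simp add: env_single_def)
  then show ?case by (blast intro: tw_mw.tw_var)
next
  case (t_abs \<Gamma> M t \<sigma>)
  then show ?case by (blast intro: tw_mw.tw_abs)
next
  case (t_app \<Gamma> t ps \<tau>1 \<Delta> u \<tau>2 \<Lambda> r \<sigma>)
  then obtain n1 n2 n3 where "mw \<Gamma> t (ch (mset (map (\<lambda>(M, \<tau>). TArr M \<tau>) ps)) \<tau>1) n1"
    "mw \<Delta> u (ch (sum_list (map fst ps)) \<tau>2) n2" "tw (env_ext \<Lambda> (mset (map snd ps))) r \<sigma> n3" by blast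
  from tw_mw.tw_app[OF this, of "\<Gamma> \<and>\<^sub>e \<Delta> \<and>\<^sub>e \<Lambda>"] show ?case by (auto simp: env_union_def)
next
  case (m_one \<Gamma> t \<sigma>)
  then show ?case by (blast intro: tw_mw1)
next
  case (m_add \<Gamma> t M \<Delta> \<sigma>)
  then obtain n1 n2 where "mw \<Gamma> t M n1" "tw \<Delta> t \<sigma> n2" by blast
  from tw_mw.mw_add[OF this, of "\<Gamma> \<and>\<^sub>e \<Delta>"] show ?case by (auto simp: env_union_def)
qed

theorem mainTheorem16:
  assumes "typing \<Gamma> t \<sigma>"
  shows "SN beta_pi t"
proof -
  from typing_tw(1)[OF assms] obtain n where "tw \<Gamma> t \<sigma> n" by blast
  from tw_SN[OF this] show ?thesis unfolding SN_def .
qed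

end
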